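(* Let $w \in S_n$, and form a table $\mathcal{T}(w)$ whose rows are indexed by the braid classes of $w$ and whose columns are indexed by the commutation classes of $w$, placing each reduced word $\mathbf{u}\in R(w)$ in the cell whose row is the braid class containing $\mathbf{u}$ and whose column is the commutation class containing $\mathbf{u}$. Then each cell of $\mathcal{T}(w)$ contains at most one reduced word; equivalently, every braid class and every commutation class of $w$ intersect in at most one element.
   Context: $S_n$ is generated by the adjacent transpositions $s_1,\dots,s_{n-1}$. A reduced word for $w$ is a word $i_1\cdots i_k$ with $w=s_{i_1}\cdots s_{i_k}$ and $k$ minimal; $R(w)$ is the set of reduced words. A braid move replaces a factor (consecutive letters) $i(i+1)i$ by $(i+1)i(i+1)$ or vice versa; a commutation move replaces a factor $ij$ with $|i-j|>1$ by $ji$. Braid classes (resp. commutation classes) of $w$ are the equivalence classes of $R(w)$ under sequences of braid moves (resp. commutation moves). *)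

theory Defs
  imports "HOL-Combinatorics.Combinatorics"
begin

definition adj_transp :: "nat \<Rightarrow> nat \<Rightarrow> nat" where
  "adj_transp i = Transposition.transpose i (Suc i)"

definition word_perm :: "nat list \<Rightarrow> (nat \<Rightarrow> nat)" where
  "word_perm ws = foldr (\<lambda>i f. adj_transp i \<circ> f) ws id"

definition is_word :: "nat \<Rightarrow> nat list \<Rightarrow> bool" where
  "is_word n ws \<longleftrightarrow> set ws \<subseteq> {1..<n}"

definition reduced_words :: "nat \<Rightarrow> (nat \<Rightarrow> nat) \<Rightarrow> nat list set" where
  "reduced_words n w = {ws. is_word n ws \<and> word_perm ws = w \<and>
       (\<forall>vs. is_word n vs \<and> word_perm vs = w \<longrightarrow> length ws \<le> length vs)}"

definition braid_move :: "nat list \<Rightarrow> nat list \<Rightarrow> bool" where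
  "braid_move u v \<longleftrightarrow> (\<exists>a b i.
      (u = a @ [i, Suc i, i] @ b \<and> v = a @ [Suc i, i, Suc i] @ b) \<or>
      (u = a @ [Suc i, i, Suc i] @ b \<and> v = a @ [i, Suc i, i] @ b))"

definition comm_move :: "nat list \<Rightarrow> nat list \<Rightarrow> bool" where
  "comm_move u v \<longleftrightarrow> (\<exists>a b i j. (Suc i < j \<or> Suc j < i) \<and>
      u = a @ [i, j] @ b \<and> v = a @ [j, i] @ b)"

definition braid_equiv :: "nat list \<Rightarrow> nat list \<Rightarrow> bool" where
  "braid_equiv = braid_move\<^sup>*\<^sup>*"

definition comm_equiv :: "nat list \<Rightarrow> nat list \<Rightarrow> bool" where
  "comm_equiv = comm_move\<^sup>*\<^sup>*"

end

theory Submission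
  imports Defs
begin

fun crs :: "(nat \<Rightarrow> nat) \<Rightarrow> nat list \<Rightarrow> nat set list" where
  "crs f [] = []"
| "crs f (i # ws) = {f i, f (Suc i)} # crs (f \<circ> Transposition.transpose i (Suc i)) ws"

definition st :: "(nat \<Rightarrow> nat) \<Rightarrow> nat list \<Rightarrow> (nat \<Rightarrow> nat)" where
  "st f ws = foldl (\<lambda>g i. g \<circ> Transposition.transpose i (Suc i)) f ws"

lemma crs_append: "crs f (a @ b) = crs f a @ crs (st f a) b"
  by (induction a arbitrary: f) (auto simp: st_def)

lemma inj_step: "inj f \<Longrightarrow> inj (f \<circ> Transposition.transpose i j)"
  unfolding inj_def by (metis comp_apply transpose_eq_imp_eq)

lemma pair_inj: assumes "inj f" "{f i, f (Suc i)} = {f j, f (Suc j)}" shows "i = (j::nat)"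
proof -
  have "(f i = f j \<and> f (Suc i) = f (Suc j)) \<or> (f i = f (Suc j) \<and> f (Suc i) = f j)"
    using assms(2) by (simp add: doubleton_eq_iff)
  then have "i = j \<or> (i = Suc j \<and> Suc i = j)" using injD[OF assms(1)] by blast
  then show ?thesis by auto
qed

lemma inj_st: "inj f \<Longrightarrow> inj (st f a)"
  by (induction a arbitrary: f) (auto simp: st_def inj_step)

lemma crs_inj: "inj f \<Longrightarrow> crs f u = crs f v \<Longrightarrow> u = v"
proof (induction u arbitrary: f v)
  case Nil
  then show ?case by (cases v) auto
next
  case (Cons i u)
  then obtain j v' where v: "v = j # v'" by (cases v) auto
  from Cons.prems v have e: "{f i, f (Suc i)} = {f j, f (Suc j)}" by simp
  have ij: "i = j" using pair_inj[OF Cons.prems(1) e] .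
  have "u = v'"
    using Cons.IH[OF inj_step[OF Cons.prems(1)], of i "Suc i" v'] Cons.prems(2) v ij by (simp add: comp_def)
  then show ?case using v ij by simp
qed

lemma filter_pairs_eq:
  "(\<And>e e'. filter (\<lambda>x. x = e \<or> x = e') xs = filter (\<lambda>x. x = e \<or> x = e') ys) \<Longrightarrow> xs = ys"
proof (induction xs arbitrary: ys)
  case Nil
  show ?case
  proof (cases ys)
    case (Cons b ys')
    with Nil[of b b] show ?thesis by simp
  qed simp
next
  case (Cons a xs)
  show ?case
  proof (cases ys)
    case Nil
    with Cons.prems[of a a] show ?thesis by simp
  next
    case (Cons b ys')
    have ab: "a = b"
    proof (rule ccontr)
      assume "a \<noteq> b"
      with Cons.prems[of a b] Cons show False by simp
    qed
    have "xs = ys'"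
    proof (rule Cons.IH)
      fix e e'
      show "filter (\<lambda>x. x = e \<or> x = e') xs = filter (\<lambda>x. x = e \<or> x = e') ys'"
        using Cons.prems[of e e'] Cons ab by (auto split: if_splits)
    qed
    then show ?thesis using Cons ab by simp
  qed
qed

lemma comm_filter:
  assumes "inj f" "comm_move u v" "e \<inter> e' \<noteq> {}"
  shows "filter (\<lambda>x. x = e \<or> x = e') (crs f u) = filter (\<lambda>x. x = e \<or> x = e') (crs f v)"
proof -
  obtain a b i j where ij: "Suc i < j \<or> Suc j < i" and u: "u = a @ [i, j] @ b"
    and v: "v = a @ [j, i] @ b" using assms(2) unfolding comm_move_def by blast
  define g where "g = st f a"
  have g: "inj g" using inj_st[OF assms(1)] g_def by simp
  define ti where "ti = Transposition.transpose i (Suc i)"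
  define tj where "tj = Transposition.transpose j (Suc j)"
  have t1: "g \<circ> ti \<circ> tj = g \<circ> tj \<circ> ti"
    using ij by (auto simp: fun_eq_iff Transposition.transpose_def ti_def tj_def)
  have a1: "ti j = j" "ti (Suc j) = Suc j" "tj i = i" "tj (Suc i) = Suc i"
    using ij by (auto simp: ti_def tj_def Transposition.transpose_def)
  have cu: "crs f u = crs f a @ [{g i, g (Suc i)}, {g j, g (Suc j)}] @ crs (g \<circ> ti \<circ> tj) b"
    using a1 by (simp add: u crs_append g_def ti_def tj_def)
  have cv: "crs f v = crs f a @ [{g j, g (Suc j)}, {g i, g (Suc i)}] @ crs (g \<circ> tj \<circ> ti) b"
    using a1 by (simp add: v crs_append g_def ti_def tj_def)
  have disj: "{g i, g (Suc i)} \<inter> {g j, g (Suc j)} = {}"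
    using ij by (auto simp: inj_eq[OF g])
  have "\<not> ({g i, g (Suc i)} \<in> {e, e'} \<and> {g j, g (Suc j)} \<in> {e, e'})"
    using disj assms(3) by (auto simp: Int_commute)
  then show ?thesis unfolding cu cv t1 by auto
qed

lemma two_pairs:
  assumes d: "A \<noteq> B" "A \<noteq> C" "B \<noteq> C" and ee: "e \<inter> e' = {}"
  shows "\<not> (({A,B} = e \<or> {A,B} = e') \<and> ({A,C} = e \<or> {A,C} = e'))"
proof
  assume h: "({A,B} = e \<or> {A,B} = e') \<and> ({A,C} = e \<or> {A,C} = e')"
  have "{A,B} \<noteq> {A,C}" using d by (simp add: doubleton_eq_iff)
  then have "({A,B} = e \<and> {A,C} = e') \<or> ({A,B} = e' \<and> {A,C} = e)" using h by blast
  then have "A \<in> e \<inter> e'" by blast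
  then show False using ee by blast
qed

lemma tri_filter:
  assumes "\<not> (P X \<and> P Y)" "\<not> (P X \<and> P Z)" "\<not> (P Y \<and> P Z)"
  shows "filter P [X,Y,Z] = filter P [Z,Y,X]"
  using assms by auto

lemma braid_filter_one:
  assumes "inj g" "e \<inter> e' = {}"
  shows "filter (\<lambda>x. x = e \<or> x = e') [{g i, g (Suc i)}, {g i, g (Suc (Suc i))}, {g (Suc i), g (Suc (Suc i))}]
       = filter (\<lambda>x. x = e \<or> x = e') [{g (Suc i), g (Suc (Suc i))}, {g i, g (Suc (Suc i))}, {g i, g (Suc i)}]"
proof -
  define A where "A = g i"
  define B where "B = g (Suc i)"
  define C where "C = g (Suc (Suc i))"
  have d: "A \<noteq> B" "A \<noteq> C" "B \<noteq> C" using assms(1) by (auto simp: A_def B_def C_def inj_eq)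
  have n1: "\<not> (({A,B} = e \<or> {A,B} = e') \<and> ({A,C} = e \<or> {A,C} = e'))"
    using two_pairs[OF d assms(2)] .
  have n2: "\<not> (({A,B} = e \<or> {A,B} = e') \<and> ({B,C} = e \<or> {B,C} = e'))"
    using two_pairs[of B A C e e'] d assms(2) by (simp add: insert_commute)
  have n3: "\<not> (({A,C} = e \<or> {A,C} = e') \<and> ({B,C} = e \<or> {B,C} = e'))"
    using two_pairs[of C A B e e'] d assms(2) by (simp add: insert_commute)
  show ?thesis unfolding A_def[symmetric] B_def[symmetric] C_def[symmetric]
    by (rule tri_filter) (use n1 n2 n3 in auto)
qed

lemma braid_filter:
  assumes "inj f" "braid_move u v" "e \<inter> e' = {}"
  shows "filter (\<lambda>x. x = e \<or> x = e') (crs f u) = filter (\<lambda>x. x = e \<or> x = e') (crs f v)"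
proof -
  have key: "filter (\<lambda>x. x = e \<or> x = e') (crs f (a @ [i, Suc i, i] @ b))
           = filter (\<lambda>x. x = e \<or> x = e') (crs f (a @ [Suc i, i, Suc i] @ b))" for a b i
  proof -
    let ?g = "st f a"
    let ?t1 = "Transposition.transpose i (Suc i)"
    let ?t2 = "Transposition.transpose (Suc i) (Suc (Suc i))"
    have g: "inj ?g" using inj_st[OF assms(1)] by simp
    have e: "?g \<circ> ?t1 \<circ> ?t2 \<circ> ?t1 = ?g \<circ> ?t2 \<circ> ?t1 \<circ> ?t2"
      by (simp add: fun_eq_iff Transposition.transpose_def)
    have cu: "crs f (a @ [i, Suc i, i] @ b) = crs f a @ [{?g i, ?g (Suc i)}, {?g i, ?g (Suc (Suc i))}, {?g (Suc i), ?g (Suc (Suc i))}] @ crs (?g \<circ> ?t1 \<circ> ?t2 \<circ> ?t1) b"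
      apply (simp only: crs_append append_Cons append_Nil crs.simps)
      apply (simp add: Transposition.transpose_def)
      done
    have cv: "crs f (a @ [Suc i, i, Suc i] @ b) = crs f a @ [{?g (Suc i), ?g (Suc (Suc i))}, {?g i, ?g (Suc (Suc i))}, {?g i, ?g (Suc i)}] @ crs (?g \<circ> ?t2 \<circ> ?t1 \<circ> ?t2) b"
      apply (simp only: crs_append append_Cons append_Nil crs.simps)
      apply (simp add: Transposition.transpose_def insert_commute)
      done
    show ?thesis unfolding cu cv e using braid_filter_one[OF g assms(3), of i]
      by (simp only: filter_append)
  qed
  from assms(2) obtain a b i where
    "(u = a @ [i, Suc i, i] @ b \<and> v = a @ [Suc i, i, Suc i] @ b) \<or>
     (u = a @ [Suc i, i, Suc i] @ b \<and> v = a @ [i, Suc i, i] @ b)"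
    unfolding braid_move_def by blast
  then show ?thesis using key[of a i b] by auto
qed

theorem corollary4p3:
  fixes n :: nat and w :: "nat \<Rightarrow> nat" and u v :: "nat list"
  assumes "w permutes {1..n}"
    and "u \<in> reduced_words n w" and "v \<in> reduced_words n w"
    and "braid_equiv u v" and "comm_equiv u v"
  shows "u = v"
proof -
  have inj: "inj (id :: nat \<Rightarrow> nat)" by simp
  have "crs id u = crs id v"
  proof (rule filter_pairs_eq)
    fix e e' :: "nat set"
    show "filter (\<lambda>x. x = e \<or> x = e') (crs id u) = filter (\<lambda>x. x = e \<or> x = e') (crs id v)"
    proof (cases "e \<inter> e' = {}")
      case True
      from assms(4)[unfolded braid_equiv_def] show ?thesis
      proof (induction rule: rtranclp_induct)
        case (step y z)
        show ?case by (rule trans[OF step.IH braid_filter[OF inj step.hyps(2) True]])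
      qed simp
    next
      case False
      from assms(5)[unfolded comm_equiv_def] show ?thesis
      proof (induction rule: rtranclp_induct)
        case (step y z)
        show ?case by (rule trans[OF step.IH comm_filter[OF inj step.hyps(2) False]])
      qed simp
    qed
  qed
  then show ?thesis using crs_inj[OF inj] by blast
qed

end
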